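(* Let $p$ be a prime, $q=p^r$, $\mathscr{C}\subseteq\mathbb{F}_q^n$ a linear code over $\mathbb{F}_q$ of dimension $k$ ($1\le k<n$), $m\ge2$, $\mathscr{D}=\{(\lambda,\ldots,\lambda):\lambda\in\mathbb{F}_{q^k}\}\subset\mathbb{F}_{q^k}^m$, $\kappa:\mathbb{F}_{q^k}\to\mathcal{L}(\mathscr{C},\mathbb{F}_p)$ an $\mathbb{F}_p$-linear isomorphism, $f_\lambda=\kappa(\lambda)$, and $Q=\operatorname{span}\{\Phi_\Lambda:\Lambda\in\mathscr{D}\}$. Then $$Q=\operatorname{span}\Big\{\sum_{\substack{(\mathbf{c}_1,\ldots,\mathbf{c}_m)\in\mathscr{C}^m\\ \mathbf{c}_1+\cdots+\mathbf{c}_m=\mathbf{c}}}|\mathbf{c}_1\ldots\mathbf{c}_m\rangle:\mathbf{c}\in\mathscr{C}\Big\}.$$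
   Context: $\zeta=e^{2\pi i/p}$; $\mathcal{L}(\mathscr{C},\mathbb{F}_p)$ is the space of $\mathbb{F}_p$-linear maps $\mathscr{C}\to\mathbb{F}_p$, with $\mathbb{F}_{q^k}$ viewed as an $\mathbb{F}_p$-space. $\phi_\lambda=q^{-k/2}\sum_{\mathbf{c}\in\mathscr{C}}\zeta^{f_\lambda(\mathbf{c})}|\mathbf{c}\rangle\in(\mathbb{C}^q)^{\otimes n}$, $\Phi_\Lambda=\phi_{\lambda_1}\otimes\cdots\otimes\phi_{\lambda_m}$; $(\mathbb{C}^q)^{\otimes nm}$ has orthonormal basis $|\mathbf{c}_1\ldots\mathbf{c}_m\rangle=|\mathbf{c}_1\rangle\otimes\cdots\otimes|\mathbf{c}_m\rangle$. *)

theory Defs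
  imports Complex_Main "HOL-Library.Function_Algebras" "HOL-Computational_Algebra.Primes"
begin

text \<open>Vectors of the Hilbert space with orthonormal basis indexed by a type x
  are modelled as functions x => complex; ket x is the basis vector.\<close>

definition ket :: "'x \<Rightarrow> 'x \<Rightarrow> complex" where
  "ket x = (\<lambda>y. if y = x then 1 else 0)"

definition cscale :: "complex \<Rightarrow> ('x \<Rightarrow> complex) \<Rightarrow> 'x \<Rightarrow> complex" where
  "cscale a v = (\<lambda>y. a * v y)"

definition cspan :: "('x \<Rightarrow> complex) set \<Rightarrow> ('x \<Rightarrow> complex) set" where
  "cspan S = module.span cscale S"

definition vscale :: "'a::times \<Rightarrow> ('n \<Rightarrow> 'a) \<Rightarrow> 'n \<Rightarrow> 'a" where
  "vscale a v = (\<lambda>i. a * v i)"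

definition linear_code :: "('n::finite \<Rightarrow> 'a::field) set \<Rightarrow> nat \<Rightarrow> bool" where
  "linear_code C k \<longleftrightarrow> module.subspace vscale C \<and> vector_space.dim vscale C = k"

text \<open>F_p is represented by residues {0..<p}; the F_p-linear maps C -> F_p
  (extended by 0 outside C).\<close>
definition Fp_dual :: "nat \<Rightarrow> ('n \<Rightarrow> 'a::field) set \<Rightarrow> (('n \<Rightarrow> 'a) \<Rightarrow> nat) set" where
  "Fp_dual p C = {f. (\<forall>c\<in>C. f c < p)
     \<and> (\<forall>c\<in>C. \<forall>d\<in>C. f (c + d) = (f c + f d) mod p)
     \<and> (\<forall>c\<in>C. \<forall>j<p. f (vscale (of_nat j) c) = (j * f c) mod p)
     \<and> (\<forall>c. c \<notin> C \<longrightarrow> f c = 0)}"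

definition Fp_linear_iso :: "nat \<Rightarrow> ('n \<Rightarrow> 'a::field) set \<Rightarrow> ('b::field \<Rightarrow> ('n \<Rightarrow> 'a) \<Rightarrow> nat) \<Rightarrow> bool" where
  "Fp_linear_iso p C \<kappa> \<longleftrightarrow>
     (\<forall>x y. \<kappa> (x + y) = (\<lambda>c. (\<kappa> x c + \<kappa> y c) mod p))
   \<and> (\<forall>x. \<forall>j<p. \<kappa> (of_nat j * x) = (\<lambda>c. (j * \<kappa> x c) mod p))
   \<and> bij_betw \<kappa> UNIV (Fp_dual p C)"

definition zeta :: "nat \<Rightarrow> complex" where
  "zeta p = cis (2 * pi / real p)"

definition phi :: "nat \<Rightarrow> nat \<Rightarrow> nat \<Rightarrow> 'v set \<Rightarrow> ('v \<Rightarrow> nat) \<Rightarrow> 'v \<Rightarrow> complex" where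
  "phi p q k C f = (\<lambda>y. complex_of_real (real q powr (- (real k / 2)))
                        * (\<Sum>c\<in>C. zeta p ^ f c * ket c y))"

text \<open>Tensor product of a list of vectors; basis |c_1...c_m> = ket [c_1,...,c_m].\<close>
definition tensor :: "('v \<Rightarrow> complex) list \<Rightarrow> 'v list \<Rightarrow> complex" where
  "tensor vs = (\<lambda>cs. if length cs = length vs
                      then (\<Prod>i<length vs. (vs ! i) (cs ! i)) else 0)"

definition Phi :: "nat \<Rightarrow> nat \<Rightarrow> nat \<Rightarrow> 'v set \<Rightarrow> ('b \<Rightarrow> 'v \<Rightarrow> nat) \<Rightarrow> 'b list \<Rightarrow> 'v list \<Rightarrow> complex" where
  "Phi p q k C \<kappa> \<Lambda> = tensor (map (\<lambda>l. phi p q k C (\<kappa> l)) \<Lambda>)"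

definition diag :: "nat \<Rightarrow> 'b list set" where
  "diag m = {replicate m l | l. True}"

end

theory Submission
  imports Defs "HOL-Library.FuncSet"
begin


lemma vs_vscale: "vector_space (vscale :: 'a::field \<Rightarrow> ('n \<Rightarrow> 'a) \<Rightarrow> _)"
  by unfold_locales (auto simp: vscale_def fun_eq_iff algebra_simps)

lemma card_code:
  fixes C :: "('n::finite \<Rightarrow> 'a::{field,finite}) set"
  assumes "linear_code C k"
  shows "card C = card (UNIV :: 'a set) ^ k"
proof -
  interpret V: vector_space "vscale :: 'a \<Rightarrow> ('n \<Rightarrow> 'a) \<Rightarrow> _" by (rule vs_vscale)
  have sub: "V.subspace C" and dk: "V.dim C = k" using assms by (auto simp: linear_code_def)
  obtain B where B: "B \<subseteq> C" "V.independent B" "C \<subseteq> V.span B" "card B = V.dim C"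
    by (rule V.basis_exists)
  have fB: "finite B" by simp
  have spB: "V.span B = C" using V.span_subspace[OF B(1) B(3) sub] .
  define g where "g u = (\<Sum>v\<in>B. vscale (u v) v)" for u
  have bij: "bij_betw g (PiE B (\<lambda>_. UNIV :: 'a set)) C"
  proof (rule bij_betwI')
    fix u u' :: "('n \<Rightarrow> 'a) \<Rightarrow> 'a" assume u: "u \<in> PiE B (\<lambda>_. UNIV)" and u': "u' \<in> PiE B (\<lambda>_. UNIV)"
    show "(g u = g u') = (u = u')"
    proof
      assume "g u = g u'"
      then have "(\<Sum>v\<in>B. vscale (u v - u' v) v) = 0"
        by (simp add: g_def V.scale_left_diff_distrib sum_subtractf)
      then have "\<forall>v\<in>B. u v - u' v = 0"
        using B(2) fB unfolding V.independent_explicit_finite_subsets by (meson order_refl)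
      then show "u = u'" using PiE_ext[OF u u'] by simp
    qed simp
  next
    fix u :: "('n \<Rightarrow> 'a) \<Rightarrow> 'a" assume "u \<in> PiE B (\<lambda>_. UNIV)"
    have "g u \<in> V.span B" unfolding g_def
      by (intro V.span_sum V.span_scale V.span_base)
    then show "g u \<in> C" using spB by simp
  next
    fix y assume "y \<in> C"
    then have "y \<in> range (\<lambda>u. \<Sum>v\<in>B. vscale (u v) v)" using spB V.span_finite[OF fB] by simp
    then obtain u where "y = g u" unfolding g_def by (rule rangeE)
    moreover have "g u = g (restrict u B)" unfolding g_def by (rule sum.cong) simp_all
    moreover have "restrict u B \<in> PiE B (\<lambda>_. UNIV)" by simp
    ultimately show "\<exists>u\<in>PiE B (\<lambda>_. UNIV). y = g u" by metis
  qed
  have "card C = card (PiE B (\<lambda>_. UNIV :: 'a set))" using bij_betw_same_card[OF bij] by simp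
  also have "\<dots> = card (UNIV :: 'a set) ^ card B" by (simp add: card_PiE fB)
  finally show ?thesis using B(4) dk by simp
qed


lemma sum_fun_apply': "(sum f A) x = (\<Sum>a\<in>A. f a x)"
  by (induct A rule: infinite_finite_induct) auto

lemma zeta_pow: "zeta p ^ j = cis (2 * pi * real j / real p)"
  unfolding zeta_def DeMoivre by (simp add: field_simps)

lemma zeta_p: "p > 0 \<Longrightarrow> zeta p ^ p = 1"
  unfolding zeta_pow by simp

lemma zeta_mod: "p > 0 \<Longrightarrow> zeta p ^ (a mod p) = zeta p ^ a"
proof -
  assume "p > 0"
  have "zeta p ^ a = zeta p ^ (p * (a div p) + a mod p)" by simp
  also have "\<dots> = (zeta p ^ p) ^ (a div p) * zeta p ^ (a mod p)"
    by (simp only: power_add power_mult)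
  finally show ?thesis using zeta_p[OF \<open>p > 0\<close>] by simp
qed

lemma zeta_ne0: "zeta p \<noteq> 0"
  by (simp add: zeta_def)

lemma zeta_ne1: assumes "0 < j" "j < p" shows "zeta p ^ j \<noteq> 1"
proof
  assume "zeta p ^ j = 1"
  then have "cos (2 * pi * real j / real p) = 1" unfolding zeta_pow
    by (metis cis.sel(1) one_complex.sel(1))
  then obtain n :: int where n: "2 * pi * real j / real p = real_of_int n * 2 * pi"
    unfolding cos_one_2pi_int by blast
  then have "2 * pi * (real j / real p) = 2 * pi * real_of_int n" using n by (simp only: times_divide_eq_right mult_ac)
  then have "real j / real p = real_of_int n" using pi_gt_zero mult_left_cancel[of "2*pi" "real j / real p" "real_of_int n"] by (metis mult_eq_0_iff pi_neq_zero zero_neq_numeral)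
  moreover have "0 < real j / real p" "real j / real p < 1" using assms by auto
  ultimately show False by (metis of_int_0_less_iff of_int_less_1_iff not_one_le_zero zero_less_iff_neq_zero int_one_le_iff_zero_less  linorder_not_le)
qed

locale qsetup =
  fixes p :: nat and C :: "('n::finite \<Rightarrow> 'a::{field,finite}) set" and \<kappa> :: "'b::{field,finite} \<Rightarrow> ('n \<Rightarrow> 'a) \<Rightarrow> nat"
  assumes pp: "prime p" and iso: "Fp_linear_iso p C \<kappa>" and sub: "module.subspace vscale C"
    and cardC: "card C = card (UNIV :: 'b set)"
begin

lemma p0: "p > 0" using pp prime_gt_0_nat by blast

lemma C0: "0 \<in> C" and Cadd: "c \<in> C \<Longrightarrow> d \<in> C \<Longrightarrow> c + d \<in> C"
  and Cdiff: "c \<in> C \<Longrightarrow> d \<in> C \<Longrightarrow> c - d \<in> C"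
proof -
  interpret V: vector_space "vscale :: 'a \<Rightarrow> ('n \<Rightarrow> 'a) \<Rightarrow> _" by (rule vs_vscale)
  show "0 \<in> C" by (rule V.subspace_0[OF sub])
  show "c \<in> C \<Longrightarrow> d \<in> C \<Longrightarrow> c + d \<in> C" by (rule V.subspace_add[OF sub])
  show "c \<in> C \<Longrightarrow> d \<in> C \<Longrightarrow> c - d \<in> C" by (rule V.subspace_diff[OF sub])
qed

lemma finC: "finite C" by simp

lemma kadd: "\<kappa> (x + y) c = (\<kappa> x c + \<kappa> y c) mod p"
  using iso unfolding Fp_linear_iso_def by simp

lemma kdual: "\<kappa> x \<in> Fp_dual p C"
  using iso unfolding Fp_linear_iso_def bij_betw_def by auto

lemma klt: "c \<in> C \<Longrightarrow> \<kappa> x c < p"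
  using kdual unfolding Fp_dual_def by auto

lemma kout: "c \<notin> C \<Longrightarrow> \<kappa> x c = 0"
  using kdual unfolding Fp_dual_def by auto

lemma kplus: "c \<in> C \<Longrightarrow> d \<in> C \<Longrightarrow> \<kappa> x (c + d) = (\<kappa> x c + \<kappa> x d) mod p"
  using kdual unfolding Fp_dual_def by auto

lemma kinj: "inj \<kappa>"
  using iso unfolding Fp_linear_iso_def bij_betw_def by auto

lemma double_mod: assumes "(a::nat) < p" "a = (a + a) mod p" shows "a = 0"
proof (cases "a + a < p")
  case True
  then show ?thesis using assms by simp
next
  case False
  then have "(a + a) mod p = (a + a - p) mod p" by (simp add: le_mod_geq)
  also have "\<dots> = a + a - p" using assms(1) by (intro mod_less) linarith
  finally show ?thesis using assms by linarith
qed

lemma k_at0: "\<kappa> x 0 = 0"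
  using kplus[OF C0 C0, of x] klt[OF C0, of x] double_mod[of "\<kappa> x 0"] by simp

lemma k0: "\<kappa> 0 c = 0"
proof (cases "c \<in> C")
  case True
  then show ?thesis using kadd[of 0 0 c] klt[OF True, of 0] double_mod[of "\<kappa> 0 c"] by simp
qed (simp add: kout)

definition chi where "chi x c = zeta p ^ \<kappa> x c"

lemma chi_ne0: "chi x c \<noteq> 0" by (simp add: chi_def zeta_ne0)

lemma chi_plus: "c \<in> C \<Longrightarrow> d \<in> C \<Longrightarrow> chi x (c + d) = chi x c * chi x d"
  unfolding chi_def kplus zeta_mod[OF p0] by (simp add: power_add)

lemma chi_add: "chi (x + y) c = chi x c * chi y c"
  unfolding chi_def kadd zeta_mod[OF p0] by (simp add: power_add)

lemma chi_at0: "chi x 0 = 1" by (simp add: chi_def k_at0)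

lemma chi_ne1: "c \<in> C \<Longrightarrow> \<kappa> y c \<noteq> 0 \<Longrightarrow> chi y c \<noteq> 1"
  unfolding chi_def using zeta_ne1 klt by auto

definition S where "S c = (\<Sum>x\<in>UNIV. chi x c)"
definition T where "T x = (\<Sum>c\<in>C. chi x c)"

lemma S_zero: assumes "c \<in> C" "\<kappa> y c \<noteq> 0" shows "S c = 0"
proof -
  have "S c = (\<Sum>x\<in>UNIV. chi (x + y) c)" unfolding S_def
    by (rule sum.reindex_bij_witness[where j="\<lambda>x. x - y" and i="\<lambda>x. x + y"]) auto
  also have "\<dots> = chi y c * S c" unfolding S_def chi_add by (simp add: sum_distrib_left mult_ac)
  finally have "(1 - chi y c) * S c = 0" by (simp add: algebra_simps)
  then show ?thesis using chi_ne1[OF assms] by simp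
qed

lemma T_zero: assumes "c1 \<in> C" "\<kappa> x c1 \<noteq> 0" shows "T x = 0"
proof -
  have "T x = (\<Sum>c\<in>C. chi x (c + c1))" unfolding T_def
    by (rule sum.reindex_bij_witness[where j="\<lambda>c. c - c1" and i="\<lambda>c. c + c1"]) (auto intro: Cadd Cdiff assms(1))
  also have "\<dots> = chi x c1 * T x" unfolding T_def
    by (simp add: chi_plus assms(1) sum_distrib_left mult_ac cong: sum.cong)
  finally have "(1 - chi x c1) * T x = 0" by (simp add: algebra_simps)
  then show ?thesis using chi_ne1[OF assms] by simp
qed

lemma sumT: "(\<Sum>x\<in>UNIV. T x) = of_nat (card C)"
proof -
  have "(\<Sum>x\<in>UNIV. T x) = T 0 + (\<Sum>x\<in>UNIV - {0}. T x)"
    by (simp add: sum.remove)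
  moreover have "T x = 0" if "x \<noteq> 0" for x
  proof -
    have "\<kappa> x \<noteq> \<kappa> 0" using kinj that by (auto dest: injD)
    then obtain c where "\<kappa> x c \<noteq> \<kappa> 0 c" by auto
    then have "\<kappa> x c \<noteq> 0" using k0 by simp
    moreover then have "c \<in> C" using kout by metis
    ultimately show ?thesis using T_zero by blast
  qed
  moreover have "T 0 = of_nat (card C)" unfolding T_def chi_def by (simp add: k0)
  ultimately show ?thesis by simp
qed

definition K where "K = {c\<in>C. \<forall>y. \<kappa> y c = 0}"

lemma S_K: "c \<in> C \<Longrightarrow> S c = (if c \<in> K then of_nat (card (UNIV :: 'b set)) else 0)"
  unfolding K_def using S_zero by (auto simp: S_def chi_def)

lemma K_single: "K = {0}"
proof -
  have "(\<Sum>c\<in>C. S c) = (\<Sum>x\<in>UNIV. T x)" unfolding S_def T_def by (rule sum.swap)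
  also have "\<dots> = of_nat (card C)" by (rule sumT)
  finally have 1: "(\<Sum>c\<in>C. S c) = of_nat (card C)" .
  have KC: "K \<subseteq> C" unfolding K_def by auto
  have "(\<Sum>c\<in>C. S c) = (\<Sum>c\<in>C. if c \<in> K then of_nat (card (UNIV :: 'b set)) else 0)"
    by (rule sum.cong) (auto simp: S_K)
  also have "\<dots> = of_nat (card K * card (UNIV :: 'b set))"
    using KC by (simp add: sum.If_cases Int_absorb1)
  finally have "card K * card (UNIV :: 'b set) = card C" using 1 by (simp only: of_nat_eq_iff)
  then have "card K = 1" using cardC by simp
  moreover have "0 \<in> K" unfolding K_def using C0 k_at0 by auto
  ultimately show ?thesis by (metis card_1_singletonE singletonD)
qed

lemma S_val: "c \<in> C \<Longrightarrow> S c = (if c = 0 then of_nat (card (UNIV :: 'b set)) else 0)"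
  using S_K K_single by simp

end


context qsetup begin

definition s0 :: "nat \<Rightarrow> nat \<Rightarrow> complex" where
  "s0 q k = complex_of_real (real q powr (- (real k / 2)))"

lemma phi_val: "phi p q k C f y = s0 q k * (if y \<in> C then zeta p ^ f y else 0)"
  unfolding phi_def ket_def s0_def by (simp add: if_distrib[where f="\<lambda>x. _ * x"] sum.delta' cong: if_cong)

lemma sumlist_in: "set cs \<subseteq> C \<Longrightarrow> sum_list cs \<in> C"
  by (induct cs) (auto intro: C0 Cadd)

lemma prod_phi: "(\<Prod>i<length cs. phi p q k C (\<kappa> x) (cs ! i))
   = (if set cs \<subseteq> C then s0 q k ^ length cs * chi x (sum_list cs) else 0)"
proof (induct cs)
  case Nil
  then show ?case by (simp add: chi_at0)
next
  case (Cons a cs)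
  have "(\<Prod>i<length (a # cs). phi p q k C (\<kappa> x) ((a # cs) ! i))
     = phi p q k C (\<kappa> x) a * (\<Prod>i<length cs. phi p q k C (\<kappa> x) (cs ! i))"
    by (simp add: prod.lessThan_Suc_shift del: prod.lessThan_Suc)
  also have "\<dots> = (if set (a # cs) \<subseteq> C then s0 q k ^ length (a # cs) * chi x (sum_list (a # cs)) else 0)"
    using Cons by (auto simp: phi_val chi_plus sumlist_in chi_def[symmetric])
  finally show ?case .
qed

lemma Phi_val: "Phi p q k C \<kappa> (replicate m x) cs
  = (if length cs = m \<and> set cs \<subseteq> C then s0 q k ^ m * chi x (sum_list cs) else 0)"
proof (cases "length cs = m")
  case True
  have "(\<Prod>i<length (map (\<lambda>l. phi p q k C (\<kappa> l)) (replicate m x)). (map (\<lambda>l. phi p q k C (\<kappa> l)) (replicate m x) ! i) (cs ! i))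
     = (\<Prod>i<length cs. phi p q k C (\<kappa> x) (cs ! i))" using True by (intro prod.cong) auto
  then show ?thesis unfolding Phi_def tensor_def using True prod_phi[where cs=cs and x=x and q=q and k=k]
    by (simp del: prod_zero_iff)
next
  case False
  then show ?thesis unfolding Phi_def tensor_def by simp
qed

definition vv where "vv m c = (\<Sum>cs\<in>{cs. length cs = m \<and> set cs \<subseteq> C \<and> sum_list cs = c}. ket cs)"

lemma finL: "finite {cs. length cs = m \<and> set cs \<subseteq> C \<and> sum_list cs = c}"
  by (rule finite_subset[OF _ finite_lists_length_eq[OF finC, of m]]) auto

lemma vv_val: "vv m c cs = (if length cs = m \<and> set cs \<subseteq> C \<and> sum_list cs = c then 1 else 0)"
  unfolding vv_def sum_fun_apply' ket_def using finL[where m=m and c=c] by (simp add: sum.delta)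

end


lemma module_cscale: "module (cscale :: complex \<Rightarrow> ('x \<Rightarrow> complex) \<Rightarrow> _)"
  by unfold_locales (auto simp: cscale_def fun_eq_iff algebra_simps)

context qsetup begin

lemma Phi_decomp: "Phi p q k C \<kappa> (replicate m x) = (\<Sum>c\<in>C. cscale (s0 q k ^ m * chi x c) (vv m c))"
proof (rule ext)
  fix cs
  show "Phi p q k C \<kappa> (replicate m x) cs = (\<Sum>c\<in>C. cscale (s0 q k ^ m * chi x c) (vv m c)) cs"
  proof (cases "length cs = m \<and> set cs \<subseteq> C")
    case True
    then have "sum_list cs \<in> C" using sumlist_in by blast
    then show ?thesis using True
      by (simp add: Phi_val sum_fun_apply' cscale_def vv_val if_distrib[where f="\<lambda>x. _ * x"] sum.delta' cong: if_cong)
  next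
    case False
    then have "Phi p q k C \<kappa> (replicate m y) cs = 0" for y unfolding Phi_val by (rule if_not_P)
    moreover have "vv m c' cs = 0" for c' using False by (auto simp: vv_val)
    ultimately show ?thesis by (simp add: sum_fun_apply' cscale_def)
  qed
qed

lemma vv_decomp: assumes c: "c \<in> C"
  shows "cscale (s0 q k ^ m * of_nat (card (UNIV :: 'b set))) (vv m c)
     = (\<Sum>x\<in>UNIV. cscale (inverse (chi x c)) (Phi p q k C \<kappa> (replicate m x)))"
proof (rule ext)
  fix cs
  show "cscale (s0 q k ^ m * of_nat (card (UNIV :: 'b set))) (vv m c) cs
     = (\<Sum>x\<in>UNIV. cscale (inverse (chi x c)) (Phi p q k C \<kappa> (replicate m x))) cs"
  proof (cases "length cs = m \<and> set cs \<subseteq> C")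
    case True
    define d where "d = sum_list cs"
    have d: "d \<in> C" using sumlist_in True unfolding d_def by blast
    have dc: "d - c \<in> C" using Cdiff[OF d c] .
    have eq: "inverse (chi x c) * chi x d = chi x (d - c)" for x
      using chi_plus[OF dc c, of x] chi_ne0[of x c] by (simp add: field_simps)
    have "(\<Sum>x\<in>UNIV. cscale (inverse (chi x c)) (Phi p q k C \<kappa> (replicate m x))) cs
        = (\<Sum>x\<in>UNIV. s0 q k ^ m * (inverse (chi x c) * chi x d))"
      using True unfolding sum_fun_apply' cscale_def Phi_val d_def by (simp add: mult_ac)
    also have "\<dots> = s0 q k ^ m * S (d - c)" unfolding eq S_def by (simp add: sum_distrib_left)
    also have "\<dots> = s0 q k ^ m * (if d = c then of_nat (card (UNIV :: 'b set)) else 0)"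
      using S_val[OF dc] by simp
    finally show ?thesis using True unfolding cscale_def vv_val d_def by simp
  next
    case False
    then have "Phi p q k C \<kappa> (replicate m y) cs = 0" for y unfolding Phi_val by (rule if_not_P)
    moreover have "vv m c' cs = 0" for c' using False by (auto simp: vv_val)
    ultimately show ?thesis by (simp add: sum_fun_apply' cscale_def)
  qed
qed

lemma main_eq: assumes "q > 0"
  shows "cspan (Phi p q k C \<kappa> ` diag m) = cspan (vv m ` C)"
proof -
  interpret M: module "cscale :: complex \<Rightarrow> (('n \<Rightarrow> 'a) list \<Rightarrow> complex) \<Rightarrow> _"
    by (rule module_cscale)
  have s0: "s0 q k \<noteq> 0" using assms unfolding s0_def by simp
  have cb: "card (UNIV :: 'b set) \<noteq> 0" by simp
  have 1: "Phi p q k C \<kappa> ` diag m \<subseteq> M.span (vv m ` C)"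
  proof
    fix v assume "v \<in> Phi p q k C \<kappa> ` diag m"
    then obtain x where v: "v = Phi p q k C \<kappa> (replicate m x)" unfolding diag_def by auto
    show "v \<in> M.span (vv m ` C)" unfolding v Phi_decomp
      by (intro M.span_sum M.span_scale M.span_base imageI)
  qed
  have 2: "vv m ` C \<subseteq> M.span (Phi p q k C \<kappa> ` diag m)"
  proof
    fix v assume "v \<in> vv m ` C"
    then obtain c where c: "c \<in> C" and v: "v = vv m c" by auto
    have "(\<Sum>x\<in>UNIV. cscale (inverse (chi x c)) (Phi p q k C \<kappa> (replicate m x))) \<in> M.span (Phi p q k C \<kappa> ` diag m)"
      by (intro M.span_sum M.span_scale M.span_base) (auto simp: diag_def)
    then have sp: "cscale (inverse (s0 q k ^ m * of_nat (card (UNIV :: 'b set))))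
        (cscale (s0 q k ^ m * of_nat (card (UNIV :: 'b set))) (vv m c)) \<in> M.span (Phi p q k C \<kappa> ` diag m)"
      unfolding vv_decomp[OF c] by (rule M.span_scale)
    have e: "inverse (s0 q k ^ m * of_nat (card (UNIV :: 'b set))) * (s0 q k ^ m * of_nat (card (UNIV :: 'b set))) = 1"
      by (rule left_inverse) (use s0 cb in simp)
    from sp show "v \<in> M.span (Phi p q k C \<kappa> ` diag m)" unfolding v M.scale_scale e M.scale_one .
  qed
  show ?thesis unfolding cspan_def using M.span_eq 1 2 by blast
qed

end

theorem proposition3p6:
  fixes p q r k m :: nat
    and C :: "('n::finite \<Rightarrow> 'a::{field,finite}) set"
    and \<kappa> :: "'b::{field,finite} \<Rightarrow> ('n \<Rightarrow> 'a) \<Rightarrow> nat"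
  assumes "prime p" and "q = p ^ r" and "card (UNIV :: 'a set) = q"
    and "linear_code C k" and "1 \<le> k" and "k < card (UNIV :: 'n set)"
    and "2 \<le> m"
    and "card (UNIV :: 'b set) = q ^ k"
    and "Fp_linear_iso p C \<kappa>"
  shows "cspan (Phi p q k C \<kappa> ` diag m)
       = cspan ((\<lambda>c. \<Sum>cs\<in>{cs. length cs = m \<and> set cs \<subseteq> C \<and> sum_list cs = c}. ket cs) ` C)"
proof -
  have sub: "module.subspace vscale C" using assms(4) unfolding linear_code_def by blast
  have cC: "card C = card (UNIV :: 'b set)" using card_code[OF assms(4)] assms(3,8) by simp
  interpret Q: qsetup p C \<kappa>
    by unfold_locales (use assms(1,9) sub cC in auto)
  have q0: "q > 0" using assms(3) by (metis card_gt_0_iff finite UNIV_not_empty)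
  have e: "(\<lambda>c. \<Sum>cs\<in>{cs. length cs = m \<and> set cs \<subseteq> C \<and> sum_list cs = c}. ket cs) = Q.vv m"
    by (rule ext) (simp add: Q.vv_def)
  show ?thesis unfolding e by (rule Q.main_eq[OF q0])
qed

end
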